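(* Let $r\ge 2$ and $t\ge 1$ be integers, and let $H$ be an $r$-partite $r$-graph. If $|E(H)|>\frac{t-1}{r}\,|\partial H|$, then $H$ contains (as a subhypergraph) every tight $r$-tree $T$ having $t$ edges.
   Context: An $r$-graph is an $r$-uniform hypergraph. An $r$-graph is $r$-partite if its vertex set can be partitioned into $r$ classes $V_1,\dots,V_r$ such that every edge contains exactly one vertex from each class. The shadow $\partial H$ of an $r$-graph $H$ is the set of all $(r-1)$-element sets contained in some edge of $H$. A tight $r$-tree is any $r$-graph constructed as follows: start with $T_1$ consisting of a single edge $e_1$ and its $r$ vertices; at each step $i\ge 2$ add a new edge $e_i$ containing exactly one new vertex $v_i$ (not in $T_{i-1}$) such that $e_i\setminus\{v_i\}$ is a subset of some edge of $T_{i-1}$, obtaining $T_i$. *)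

theory Defs
  imports Complex_Main
begin

definition r_graph :: "nat \<Rightarrow> 'a set set \<Rightarrow> bool" where
  "r_graph r H \<longleftrightarrow> (\<forall>e\<in>H. finite e \<and> card e = r)"

definition r_partite :: "nat \<Rightarrow> 'a set set \<Rightarrow> bool" where
  "r_partite r H \<longleftrightarrow> (\<exists>c :: 'a \<Rightarrow> nat. (\<forall>v\<in>\<Union>H. c v < r) \<and>
      (\<forall>e\<in>H. \<forall>i<r. card {v\<in>e. c v = i} = 1))"

definition shadow :: "nat \<Rightarrow> 'a set set \<Rightarrow> 'a set set" where
  "shadow r H = {S. \<exists>e\<in>H. S \<subseteq> e \<and> card S = r - 1}"

inductive tight_tree :: "nat \<Rightarrow> 'b set set \<Rightarrow> bool" for r where
  single: "finite e \<Longrightarrow> card e = r \<Longrightarrow> tight_tree r {e}"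
| step: "tight_tree r T \<Longrightarrow> v \<notin> \<Union>T \<Longrightarrow> f \<in> T \<Longrightarrow> S \<subseteq> f \<Longrightarrow> card S = r - 1
          \<Longrightarrow> tight_tree r (insert (insert v S) T)"

definition contains_copy :: "'a set set \<Rightarrow> 'b set set \<Rightarrow> bool" where
  "contains_copy H T \<longleftrightarrow> (\<exists>\<phi> :: 'b \<Rightarrow> 'a. inj_on \<phi> (\<Union>T) \<and> (\<forall>e\<in>T. \<phi> ` e \<in> H))"

end

theory Submission
  imports Defs
begin


lemma tt_basic:
  assumes "tight_tree r T" "r \<ge> 1"
  shows "finite T \<and> T \<noteq> {} \<and> (\<forall>e\<in>T. finite e \<and> card e = r) \<and> card (\<Union>T) + 1 = r + card T"
  using assms
proof (induction rule: tight_tree.induct)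
  case (single e)
  then show ?case by simp
next
  case (step T v f S)
  have fin: "finite S" using step by (meson finite_subset)
  have vS: "v \<notin> S" using step by blast
  have c1: "card (insert v S) = r" using fin vS step by simp
  have fU: "finite (\<Union>T)" using step by blast
  have U: "\<Union>(insert (insert v S) T) = insert v (\<Union>T)" using step by blast
  have nT: "insert v S \<notin> T" using step by blast
  show ?case using step fin c1 U nT fU by (simp)
qed

lemma tt_color:
  assumes "tight_tree r T" "r \<ge> 1"
  shows "\<exists>d::'b \<Rightarrow> nat. \<forall>e\<in>T. d ` e = {..<r}"
  using assms
proof (induction rule: tight_tree.induct)
  case (single e)
  then obtain h where "bij_betw h e {0..<card e}" using ex_bij_betw_finite_nat by blast
  then show ?case using single by (auto simp: bij_betw_def lessThan_atLeast0)
next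
  case (step T v f S)
  then obtain d where d: "\<forall>e\<in>T. d ` e = {..<r}" by blast
  have b: "finite f" "card f = r" using tt_basic[OF step(1) step(7)] step by auto
  have df: "d ` f = {..<r}" using d step by blast
  have inj: "inj_on d f" using b df by (simp add: eq_card_imp_inj_on)
  have fin: "finite S" using step b by (meson finite_subset)
  have cS: "card (d ` S) = r - 1" using inj step card_image inj_on_subset by metis
  have sub: "d ` S \<subseteq> {..<r}" using df step by blast
  have "card ({..<r} - d ` S) = r - (r - 1)" using cS sub fin by (simp add: card_Diff_subset)
  then have "card ({..<r} - d ` S) = 1" using step(7) by simp
  then have "{..<r} - d ` S \<noteq> {}" by (metis card.empty zero_neq_one)
  then obtain j where j: "j < r" "j \<notin> d ` S" by blast
  define d' where "d' = d(v := j)"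
  have vS: "v \<notin> S" using step by blast
  have e1: "d' ` S = d ` S" using vS unfolding d'_def by auto
  have "d' ` insert v S = insert (d' v) (d' ` S)" by simp
  also have "\<dots> = insert j (d ` S)" using e1 by (simp add: d'_def)
  also have "\<dots> = {..<r}"
  proof (rule card_subset_eq)
    show "finite {..<r}" by simp
    show "insert j (d ` S) \<subseteq> {..<r}" using j sub by blast
    show "card (insert j (d ` S)) = card {..<r}" using j cS fin step(7) by simp
  qed
  finally have new: "d' ` insert v S = {..<r}" .
  have old: "\<forall>e\<in>T. d' ` e = {..<r}"
  proof
    fix e assume "e \<in> T"
    then have "v \<notin> e" using step by blast
    then have "d' ` e = d ` e" unfolding d'_def by auto
    then show "d' ` e = {..<r}" using d \<open>e \<in> T\<close> by simp
  qed
  show ?case using new old by blast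
qed



lemma shadow_finite: "finite H \<Longrightarrow> r_graph r H \<Longrightarrow> finite (shadow r H)"
proof -
  assume a: "finite H" "r_graph r H"
  have "finite (\<Union>H)" using a unfolding r_graph_def by blast
  moreover have "shadow r H \<subseteq> Pow (\<Union>H)" unfolding shadow_def by blast
  ultimately show ?thesis by (meson finite_Pow_iff finite_subset)
qed

lemma deletion:
  fixes H :: "'a set set" and W :: "'a set \<Rightarrow> nat"
  assumes "finite H" "r_graph r H" "card H > (\<Sum>S\<in>shadow r H. W S)"
  shows "\<exists>H'\<subseteq>H. H' \<noteq> {} \<and> (\<forall>e\<in>H'. \<forall>u\<in>e. card {e'\<in>H'. e - {u} \<subseteq> e'} > W (e - {u}))"
  using assms
proof (induction "card H" arbitrary: H rule: less_induct)
  case less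
  show ?case
  proof (cases "\<forall>e\<in>H. \<forall>u\<in>e. card {e'\<in>H. e - {u} \<subseteq> e'} > W (e - {u})")
    case True
    moreover have "H \<noteq> {}" using less.prems by auto
    ultimately show ?thesis by blast
  next
    case False
    then obtain e u where eu: "e \<in> H" "u \<in> e" and le: "card {e'\<in>H. e - {u} \<subseteq> e'} \<le> W (e - {u})"
      by (meson not_less)
    define S where "S = e - {u}"
    define D where "D = {e'\<in>H. S \<subseteq> e'}"
    define H2 where "H2 = H - D"
    have fD: "finite D" using less.prems unfolding D_def by simp
    have eD: "e \<in> D" using eu unfolding D_def S_def by blast
    have cH: "card H = card H2 + card D" unfolding H2_def
      using fD less.prems(1) D_def by (metis (no_types, lifting) card_Diff_subset le_add_diff_inverse2 card_mono mem_Collect_eq subsetI)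
    have Dpos: "card D > 0" using fD eD by (metis card_gt_0_iff empty_iff)
    have lt: "card H2 < card H" using cH Dpos by simp
    have fin2: "finite H2" using less.prems unfolding H2_def by simp
    have rg2: "r_graph r H2" using less.prems unfolding H2_def r_graph_def by blast
    have Ssh: "S \<in> shadow r H"
    proof -
      have "finite e" "card e = r" using less.prems eu unfolding r_graph_def by auto
      then have "card S = r - 1" unfolding S_def using eu by simp
      then show ?thesis unfolding shadow_def S_def using eu by blast
    qed
    have sub: "shadow r H2 \<subseteq> shadow r H - {S}"
      unfolding shadow_def H2_def D_def by blast
    have fsh: "finite (shadow r H)" using shadow_finite less.prems by blast
    have "(\<Sum>X\<in>shadow r H2. W X) \<le> (\<Sum>X\<in>shadow r H - {S}. W X)"
      using sub fsh by (intro sum_mono2) auto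
    also have "\<dots> = (\<Sum>X\<in>shadow r H. W X) - W S" using Ssh fsh by (simp add: sum_diff1_nat)
    finally have s2: "(\<Sum>X\<in>shadow r H2. W X) + W S \<le> (\<Sum>X\<in>shadow r H. W X)"
      using Ssh fsh by (metis add.commute le_diff_conv2 member_le_sum zero_le)
    have "card D \<le> W S" using le unfolding D_def S_def .
    then have "card H2 > (\<Sum>X\<in>shadow r H2. W X)" using s2 cH less.prems(3) by linarith
    then obtain H' where "H' \<subseteq> H2" "H' \<noteq> {}"
      "\<forall>e\<in>H'. \<forall>u\<in>e. card {e'\<in>H'. e - {u} \<subseteq> e'} > W (e - {u})"
      using less.hyps[OF lt fin2 rg2] by blast
    then show ?thesis unfolding H2_def by blast
  qed
qed



lemma m2: "(a::nat) < 2*r \<Longrightarrow> a mod r = (if a < r then a else a - r)"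
  by (metis le_mod_geq less_diff_conv2 mod_less mult_2 not_less)

lemma shift_img: "0 < (r::nat) \<Longrightarrow> k < r \<Longrightarrow> (\<lambda>i. (i+k) mod r) ` {..<r} = {..<r}"
proof
  assume r: "0 < r" "k < r"
  show "(\<lambda>i. (i+k) mod r) ` {..<r} \<subseteq> {..<r}" using r by auto
  show "{..<r} \<subseteq> (\<lambda>i. (i+k) mod r) ` {..<r}"
  proof
    fix j assume j: "j \<in> {..<r}"
    define i where "i = (if k \<le> j then j - k else j + r - k)"
    have "i < r" using j r unfolding i_def by auto
    moreover have "(i + k) mod r = j" using j r m2[of "i+k" r] unfolding i_def by auto
    ultimately show "j \<in> (\<lambda>i. (i+k) mod r) ` {..<r}" by (metis imageI lessThan_iff)
  qed
qed

lemma shift_count: "x < (r::nat) \<Longrightarrow> j < r \<Longrightarrow> card {k\<in>{..<r}. (x+k) mod r = j} = 1"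
proof -
  assume a: "x < r" "j < r"
  have "{k\<in>{..<r}. (x+k) mod r = j} = {if x \<le> j then j - x else j + r - x}"
  proof (rule set_eqI, rule iffI)
    fix k assume "k \<in> {k\<in>{..<r}. (x+k) mod r = j}"
    then have k: "k < r" "(x+k) mod r = j" by auto
    then have "(if x + k < r then x + k else x + k - r) = j" using m2[of "x+k" r] a by auto
    then show "k \<in> {if x \<le> j then j - x else j + r - x}" using a k by (auto split: if_splits)
  next
    fix k assume "k \<in> {if x \<le> j then j - x else j + r - x}"
    then have k: "k = (if x \<le> j then j - x else j + r - x)" by simp
    then have "k < r" using a by auto
    moreover have "(x+k) mod r = j" using m2[of "x+k" r] a k by auto
    ultimately show "k \<in> {k\<in>{..<r}. (x+k) mod r = j}" by simp
  qed
  then show ?thesis by simp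
qed

lemma count_sum:
  assumes "finite V" "\<forall>x\<in>V. d x < (r::nat)" "j < r"
  shows "(\<Sum>k<r. card {x\<in>V. (d x + k) mod r = j}) = card V"
proof -
  have "(\<Sum>k<r. card {x\<in>V. (d x + k) mod r = j}) = (\<Sum>k<r. \<Sum>x\<in>V. if (d x + k) mod r = j then 1 else 0)"
    using assms(1) by (simp add: sum.inter_filter[symmetric])
  also have "\<dots> = (\<Sum>x\<in>V. \<Sum>k<r. if (d x + k) mod r = j then 1 else 0)" by (rule sum.swap)
  also have "\<dots> = (\<Sum>x\<in>V. card {k\<in>{..<r}. (d x + k) mod r = j})"
    by (simp add: sum.inter_filter[symmetric])
  also have "\<dots> = (\<Sum>x\<in>V. 1)" using shift_count assms(2,3) by (intro sum.cong) auto
  finally show ?thesis by simp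
qed



lemma embed:
  fixes T :: "'b set set" and H :: "'a set set" and d :: "'b \<Rightarrow> nat" and c :: "'a \<Rightarrow> nat"
  assumes "tight_tree r T" "r \<ge> 1" "\<Union>T \<subseteq> V" "finite V"
   "\<forall>e\<in>T. d`e = {..<r}" "H \<noteq> {}" "finite H" "\<forall>h\<in>H. finite h \<and> card h = r \<and> c`h = {..<r}"
   "\<forall>h\<in>H. \<forall>u\<in>h. card {h'\<in>H. h - {u} \<subseteq> h'} \<ge> card {x\<in>V. d x = c u}"
  shows "\<exists>\<phi>. inj_on \<phi> (\<Union>T) \<and> (\<forall>x\<in>\<Union>T. c (\<phi> x) = d x) \<and> (\<forall>e\<in>T. \<phi>`e \<in> H)"
  using assms
proof (induction rule: tight_tree.induct)
  case (single e)
  obtain h where h: "h \<in> H" using single by blast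
  have hh: "finite h" "card h = r" "c ` h = {..<r}" using single h by auto
  have injc: "inj_on c h" using hh by (simp add: eq_card_imp_inj_on)
  have de: "d ` e = {..<r}" using single by simp
  have injd: "inj_on d e" using de single by (simp add: eq_card_imp_inj_on)
  define \<phi> where "\<phi> = (\<lambda>x. the_inv_into h c (d x))"
  have col: "\<forall>x\<in>e. c (\<phi> x) = d x"
    unfolding \<phi>_def using de hh injc by (metis f_the_inv_into_f imageI)
  have inj: "inj_on \<phi> e" using col injd by (metis inj_on_def)
  have into: "\<phi> ` e \<subseteq> h" unfolding \<phi>_def using de hh the_inv_into_into[OF injc _ subset_refl] by blast
  have eq: "\<phi> ` e = h" using into inj hh single by (metis card_image card_subset_eq)
  show ?case by (rule exI[of _ \<phi>]) (simp add: inj col eq h)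
next
  case (step T v f S)
  have Ubig: "\<Union>(insert (insert v S) T) = insert v (\<Union>T)" using step.hyps step.prems by blast
  have IH: "\<exists>\<phi>. inj_on \<phi> (\<Union>T) \<and> (\<forall>x\<in>\<Union>T. c (\<phi> x) = d x) \<and> (\<forall>e\<in>T. \<phi>`e \<in> H)"
    apply (rule step.IH)
    using step.prems step.hyps by auto
  then obtain \<phi> where ph: "inj_on \<phi> (\<Union>T)" "\<forall>x\<in>\<Union>T. c (\<phi> x) = d x" "\<forall>e\<in>T. \<phi>`e \<in> H" by blast
  have tb: "finite f" "card f = r" using tt_basic[OF step.hyps(1) step.prems(1)] step.hyps step.prems by auto
  have fS: "finite S" using tb step.hyps step.prems by (meson finite_subset)
  have vS: "v \<notin> S" using step.hyps step.prems by blast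
  have cvS: "card (insert v S) = r" using fS vS step.hyps step.prems by simp
  have dvS: "d ` insert v S = {..<r}" using step.hyps step.prems by simp
  have ccc: "card (d ` insert v S) = card (insert v S)" using dvS cvS by simp
  have injvS: "inj_on d (insert v S)" using ccc fS by (intro eq_card_imp_inj_on) auto
  have dS: "d ` S = {..<r} - {d v}" using injvS dvS vS by (auto simp: image_iff)
  have df: "d ` f = {..<r}" using step.hyps step.prems by simp
  have injf: "inj_on d f" using df tb by (simp add: eq_card_imp_inj_on)
  have "card (f - S) = 1" using tb fS step.hyps step.prems by (simp add: card_Diff_subset)
  then obtain w where w: "f - S = {w}" by (meson card_1_singletonE)
  have wf: "w \<in> f" "w \<notin> S" using w by auto
  have dw: "d w = d v"
  proof -
    have "d w \<notin> d ` S" using injf wf step.hyps step.prems by (meson inj_on_image_mem_iff)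
    moreover have "d w < r" using df wf by blast
    ultimately show ?thesis using dS by blast
  qed
  have fT: "f \<subseteq> \<Union>T" using step.hyps step.prems by blast
  have ST: "S \<subseteq> \<Union>T" using step.hyps step.prems by blast
  define h where "h = \<phi> ` f"
  define u where "u = \<phi> w"
  have hH: "h \<in> H" using ph step.hyps step.prems unfolding h_def by blast
  have uh: "u \<in> h" using wf unfolding u_def h_def by blast
  have hu: "h - {u} = \<phi> ` S"
  proof -
    have "S = f - {w}" using w step.hyps step.prems by blast
    moreover have "\<phi> ` (f - {w}) = \<phi> ` f - \<phi> ` {w}"
      by (rule inj_on_image_set_diff[OF ph(1)]) (use fT wf in auto)
    ultimately show ?thesis unfolding h_def u_def by simp
  qed
  have cu: "c u = d v" using ph(2) fT wf dw unfolding u_def by auto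
  define j where "j = d v"
  have jr: "j < r" using dvS unfolding j_def by blast
  have vV: "v \<in> V" using step.hyps step.prems by blast
  define E where "E = {h'\<in>H. \<phi> ` S \<subseteq> h'}"
  have degE: "card E \<ge> card {x\<in>V. d x = j}"
    using step.prems(8) hH uh hu cu unfolding E_def j_def by metis
  have cphS: "c ` (\<phi> ` S) = d ` S" using ph(2) ST by (auto simp: image_image intro!: image_cong)
  have cardphS: "card (\<phi> ` S) = r - 1" using ph(1) ST step.hyps step.prems fS by (metis card_image inj_on_subset)
  have fphS: "finite (\<phi> ` S)" using fS by simp
  define Z where "Z = \<Union>E - \<phi> ` S"
  have fE: "finite E" "\<forall>h'\<in>E. finite h'" using step.hyps step.prems unfolding E_def by auto
  have fZ: "finite Z" using fE unfolding Z_def by blast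
  have Eim: "E \<subseteq> (\<lambda>y. insert y (\<phi> ` S)) ` Z"
  proof
    fix h' assume h': "h' \<in> E"
    have hh': "finite h'" "card h' = r" "\<phi> ` S \<subseteq> h'" using h' step.hyps step.prems unfolding E_def by auto
    have "card (h' - \<phi> ` S) = 1" using hh' cardphS fphS step.prems(1) by (simp add: card_Diff_subset)
    then obtain y where y: "h' - \<phi> ` S = {y}" by (meson card_1_singletonE)
    have "h' = insert y (\<phi> ` S)" using y hh' by blast
    moreover have "y \<in> Z" using y h' unfolding Z_def by blast
    ultimately show "h' \<in> (\<lambda>y. insert y (\<phi> ` S)) ` Z" by blast
  qed
  have cEZ: "card E \<le> card Z" using Eim fZ by (meson card_image_le card_mono finite_imageI le_trans)
  have Zcol: "\<forall>y\<in>Z. c y = j"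
  proof
    fix y assume "y \<in> Z"
    then obtain h' where h': "h' \<in> E" "y \<in> h'" "y \<notin> \<phi> ` S" unfolding Z_def by blast
    have hh': "finite h'" "card h' = r" "c ` h' = {..<r}" "\<phi> ` S \<subseteq> h'" using h' step.hyps step.prems unfolding E_def by auto
    have injh: "inj_on c h'" using hh' by (simp add: eq_card_imp_inj_on)
    have "c y \<notin> c ` (\<phi> ` S)" using injh h' hh' by (meson inj_on_image_mem_iff)
    moreover have "c y < r" using hh' h' by blast
    ultimately show "c y = j" using cphS dS unfolding j_def by simp
  qed
  define U where "U = \<phi> ` {x\<in>\<Union>T. d x = j}"
  have UTV: "\<Union>T \<subseteq> V" using Ubig step.prems(2) by blast
  have fUT: "finite (\<Union>T)" using UTV step.prems(3) by (rule finite_subset)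
  have "card U \<le> card {x\<in>\<Union>T. d x = j}" unfolding U_def using fUT by (intro card_image_le) (rule finite_subset[OF _ fUT], blast)
  also have "\<dots> < card {x\<in>V. d x = j}"
  proof (rule psubset_card_mono)
    show "finite {x\<in>V. d x = j}" using step.hyps step.prems by simp
    show "{x\<in>\<Union>T. d x = j} \<subset> {x\<in>V. d x = j}" using step.hyps step.prems vV unfolding j_def by blast
  qed
  finally have "card U < card Z" using degE cEZ by linarith
  moreover have fU: "finite U" unfolding U_def by (rule finite_imageI, rule finite_subset[OF _ fUT], blast)
  ultimately have "\<not> Z \<subseteq> U" by (meson card_mono leD)
  then obtain y where yZ: "y \<in> Z" "y \<notin> U" by blast
  have ynot: "y \<notin> \<phi> ` (\<Union>T)"
  proof
    assume "y \<in> \<phi> ` (\<Union>T)"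
    then obtain x where x: "x \<in> \<Union>T" "y = \<phi> x" by blast
    then have "d x = j" using ph(2) Zcol yZ by force
    then show False using x yZ unfolding U_def by blast
  qed
  have yE: "insert y (\<phi> ` S) \<in> H"
  proof -
    obtain h' where h': "h' \<in> E" "y \<in> h'" "y \<notin> \<phi> ` S" using yZ unfolding Z_def by blast
    have hh': "finite h'" "card h' = r" "\<phi> ` S \<subseteq> h'" "h' \<in> H" using h' step.hyps step.prems unfolding E_def by auto
    have "insert y (\<phi> ` S) = h'"
    proof (rule card_subset_eq)
      show "finite h'" using hh' by simp
      show "insert y (\<phi> ` S) \<subseteq> h'" using hh' h' by blast
      show "card (insert y (\<phi> ` S)) = card h'" using h' fphS cardphS hh' step.prems(1) by simp
    qed
    then show ?thesis using hh' by simp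
  qed
  define \<psi> where "\<psi> = \<phi>(v := y)"
  have vT: "v \<notin> \<Union>T" using step.hyps step.prems by blast
  have agree: "\<forall>x\<in>\<Union>T. \<psi> x = \<phi> x" unfolding \<psi>_def using vT by auto
  have inj2: "inj_on \<psi> (insert v (\<Union>T))"
  proof -
    have "inj_on \<psi> (\<Union>T)" using ph(1) agree by (metis inj_on_cong)
    moreover have "\<psi> v \<notin> \<psi> ` (\<Union>T)" using ynot agree unfolding \<psi>_def
      by (metis fun_upd_same image_cong)
    ultimately show ?thesis using vT by simp
  qed
  have col2: "\<forall>x\<in>insert v (\<Union>T). c (\<psi> x) = d x"
    using agree ph(2) Zcol yZ unfolding \<psi>_def j_def by auto
  have edges2: "\<forall>e\<in>insert (insert v S) T. \<psi> ` e \<in> H"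
  proof
    fix e assume e: "e \<in> insert (insert v S) T"
    show "\<psi> ` e \<in> H"
    proof (cases "e \<in> T")
      case True
      then have "\<psi> ` e = \<phi> ` e" using agree by (meson Union_upper image_cong subsetD)
      then show ?thesis using ph(3) True by simp
    next
      case False
      then have "e = insert v S" using e by blast
      moreover have "\<psi> ` S = \<phi> ` S" using agree ST by (meson image_cong subsetD)
      moreover have "\<psi> v = y" unfolding \<psi>_def by simp
      ultimately have "\<psi> ` e = insert y (\<phi> ` S)" by (metis image_insert)
      then show ?thesis using yE by simp
    qed
  qed
  show ?case using inj2 col2 edges2 Ubig by metis
qed


theorem theorem1p2:
  fixes r t :: nat and H :: "'a set set" and T :: "'b set set"
  assumes "r \<ge> 2" and "t \<ge> 1"
    and "finite H" and "r_graph r H" and "r_partite r H"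
    and "real (card H) > (real t - 1) / real r * real (card (shadow r H))"
    and "tight_tree r T" and "card T = t"
  shows "contains_copy H T"
proof -
  have r1: "r \<ge> 1" "0 < r" using assms(1) by auto
  obtain c :: "'a \<Rightarrow> nat" where c1: "\<forall>v\<in>\<Union>H. c v < r" and c2: "\<forall>e\<in>H. \<forall>i<r. card {v\<in>e. c v = i} = 1"
    using assms(5) unfolding r_partite_def by blast
  have hc: "\<forall>e\<in>H. c ` e = {..<r}"
  proof
    fix e assume e: "e \<in> H"
    show "c ` e = {..<r}"
    proof
      show "c ` e \<subseteq> {..<r}" using c1 e by auto
      show "{..<r} \<subseteq> c ` e"
      proof
        fix i assume "i \<in> {..<r}"
        then have "card {v\<in>e. c v = i} = 1" using c2 e by auto
        then have "{v\<in>e. c v = i} \<noteq> {}" by (metis card.empty zero_neq_one)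
        then show "i \<in> c ` e" by blast
      qed
    qed
  qed
  have HR: "\<forall>h\<in>H. finite h \<and> card h = r \<and> c ` h = {..<r}"
    using hc assms(4) unfolding r_graph_def by blast
  define miss where "miss = (\<lambda>S. SOME i. i < r \<and> i \<notin> c ` S)"
  have missl: "miss (h - {u}) = c u" if h: "h \<in> H" "u \<in> h" for h u
  proof -
    have inj: "inj_on c h" using HR h by (simp add: eq_card_imp_inj_on)
    have "c ` (h - {u}) = c ` h - c ` {u}"
      by (rule inj_on_image_set_diff[OF inj]) (use h in auto)
    then have "c ` (h - {u}) = {..<r} - {c u}" using HR h by simp
    moreover have "c u < r" using HR h by blast
    ultimately show ?thesis unfolding miss_def by (intro some_equality) auto
  qed
  have tb: "finite T" "T \<noteq> {}" "\<forall>e\<in>T. finite e \<and> card e = r" "card (\<Union>T) + 1 = r + t"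
    using tt_basic[OF assms(7) r1(1)] assms(8) by auto
  define V where "V = \<Union>T"
  have fV: "finite V" unfolding V_def using tb by blast
  obtain d :: "'b \<Rightarrow> nat" where d: "\<forall>e\<in>T. d ` e = {..<r}" using tt_color[OF assms(7) r1(1)] by blast
  have dV: "\<forall>x\<in>V. d x < r" using d unfolding V_def by blast
  define a where "a = (\<lambda>k j. card {x\<in>V. (d x + k) mod r = j})"
  have shimg: "\<forall>e\<in>T. (\<lambda>x. (d x + k) mod r) ` e = {..<r}" if "k < r" for k
  proof
    fix e assume "e \<in> T"
    then have "(\<lambda>x. (d x + k) mod r) ` e = (\<lambda>i. (i+k) mod r) ` (d ` e)" by (simp add: image_image)
    also have "\<dots> = {..<r}" using d \<open>e \<in> T\<close> shift_img[OF r1(2) that] by simp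
    finally show "(\<lambda>x. (d x + k) mod r) ` e = {..<r}" .
  qed
  have apos: "a k j \<ge> 1" if "k < r" "j < r" for k j
  proof -
    obtain e where e: "e \<in> T" using tb by blast
    then have "j \<in> (\<lambda>x. (d x + k) mod r) ` e" using shimg[OF that(1)] that(2) by blast
    then obtain x where "x \<in> e" "(d x + k) mod r = j" by blast
    then have "x \<in> {x\<in>V. (d x + k) mod r = j}" using e unfolding V_def by blast
    moreover have "finite {x\<in>V. (d x + k) mod r = j}" using fV by simp
    ultimately show ?thesis unfolding a_def by (metis One_nat_def Suc_leI card_gt_0_iff empty_iff)
  qed
  have asum: "(\<Sum>k<r. a k j - 1) \<le> t - 1" for j
  proof (cases "j < r")
    case True
    have "(\<Sum>k<r. (a k j - 1) + 1) = (\<Sum>k<r. a k j - 1) + (\<Sum>k<r. (1::nat))" by (rule sum.distrib)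
    then have "(\<Sum>k<r. a k j - 1) + r = (\<Sum>k<r. (a k j - 1) + 1)" by simp
    also have "\<dots> = (\<Sum>k<r. a k j)" proof (rule sum.cong)
      fix x assume "x \<in> {..<r}"
      then have "a x j \<ge> 1" using apos True by simp
      then show "a x j - 1 + 1 = a x j" by simp
    qed simp
    also have "\<dots> = card V" unfolding a_def using count_sum[OF fV dV True] .
    finally show ?thesis using tb(4) unfolding V_def by linarith
  next
    case False
    have "a k j = 0" for k
    proof -
      have "\<forall>x. (d x + k) mod r \<noteq> j" using False r1(2) by (metis mod_less_divisor)
      then show ?thesis unfolding a_def by simp
    qed
    then show ?thesis by simp
  qed
  define sh where "sh = shadow r H"
  have fsh: "finite sh" unfolding sh_def using shadow_finite assms(3,4) by blast
  define X where "X = (\<lambda>k. \<Sum>S\<in>sh. a k (miss S) - 1)"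
  have "(\<Sum>k<r. X k) = (\<Sum>S\<in>sh. \<Sum>k<r. a k (miss S) - 1)" unfolding X_def by (rule sum.swap)
  also have "\<dots> \<le> (\<Sum>S\<in>sh. t - 1)" using asum by (intro sum_mono) auto
  also have "\<dots> = (t - 1) * card sh" by simp
  finally have Xs: "(\<Sum>k<r. X k) \<le> (t - 1) * card sh" .
  have "real (t - 1) / real r * real (card sh) < real (card H)"
    using assms(6) assms(2) unfolding sh_def by (simp add: of_nat_diff)
  then have "real (t - 1) * real (card sh) < real r * real (card H)"
    using r1(2) by (simp add: field_simps)
  then have lt: "(t - 1) * card sh < r * card H" by (metis of_nat_less_iff of_nat_mult)
  obtain k where k: "k < r" "X k < card H"
  proof (rule ccontr)
    assume "\<not> thesis"
    with that have "\<forall>k<r. X k \<ge> card H" by (meson not_less)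
    then have "(\<Sum>k<r. card H) \<le> (\<Sum>k<r. X k)" by (intro sum_mono) auto
    then show False using Xs lt by simp
  qed
  obtain H' where H': "H' \<subseteq> H" "H' \<noteq> {}"
    "\<forall>e\<in>H'. \<forall>u\<in>e. card {e'\<in>H'. e - {u} \<subseteq> e'} > a k (miss (e - {u})) - 1"
    using deletion[OF assms(3,4), of "\<lambda>S. a k (miss S) - 1"] k(2) unfolding X_def sh_def by blast
  define d' where "d' = (\<lambda>x. (d x + k) mod r)"
  have deg: "\<forall>h\<in>H'. \<forall>u\<in>h. card {h'\<in>H'. h - {u} \<subseteq> h'} \<ge> card {x\<in>V. d' x = c u}"
  proof (intro ballI)
    fix h u assume hu: "h \<in> H'" "u \<in> h"
    then have "miss (h - {u}) = c u" using missl H'(1) by blast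
    then have "card {h'\<in>H'. h - {u} \<subseteq> h'} > a k (c u) - 1" using H'(3) hu by metis
    then show "card {h'\<in>H'. h - {u} \<subseteq> h'} \<ge> card {x\<in>V. d' x = c u}" unfolding a_def d'_def by linarith
  qed
  have fH': "finite H'" using H'(1) assms(3) by (rule finite_subset)
  have UV: "\<Union>T \<subseteq> V" by (simp add: V_def)
  have dd: "\<forall>e\<in>T. d' ` e = {..<r}" using shimg[OF k(1)] unfolding d'_def .
  have HR': "\<forall>h\<in>H'. finite h \<and> card h = r \<and> c ` h = {..<r}" using HR H'(1) by blast
  obtain \<phi> where ph: "inj_on \<phi> (\<Union>T)" "\<forall>e\<in>T. \<phi>`e \<in> H'"
    using embed[OF assms(7) r1(1) UV fV dd H'(2) fH' HR' deg] by blast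
  show ?thesis unfolding contains_copy_def using ph H'(1) by blast
qed


end
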